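(* Let $m_X,m_Y,\Omega_X,\Omega_Y,\alpha>0$, and for each $\bar\gamma>0$ let $f_\gamma$, $F_\gamma$ denote the pdf and cdf of the instantaneous SNR of the $\alpha$-Beaulieu–Xie shadowed channel with average SNR $\bar\gamma$. Then for every fixed $\gamma>0$, as $\bar\gamma\to\infty$, $$f_\gamma(\gamma)\sim\frac{\alpha(1-\bar\beta)^{m_Y}}{2\,\mathrm{C}_\alpha^{m_X}\Gamma(m_X)\,\bar\gamma}\left(\frac{\gamma}{\bar\gamma}\right)^{\frac{\alpha m_X}{2}-1}\exp\!\Big(-\mathrm{C}_\alpha^{-1}\big(\tfrac{\gamma}{\bar\gamma}\big)^{\alpha/2}\Big),\qquad F_\gamma(\gamma)\sim\frac{(1-\bar\beta)^{m_Y}}{\mathrm{C}_\alpha^{m_X}\Gamma(m_X+1)}\left(\frac{\gamma}{\bar\gamma}\right)^{\frac{\alpha m_X}{2}},$$ where $a\sim b$ means $a/b\to1$.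
   Context: Fix parameters $m_X,m_Y,\Omega_X,\Omega_Y>0$. The Beaulieu–Xie shadowed envelope is a random variable $\bar R>0$ with density $$f_{\bar R}(r)=\frac{2r^{2m_X-1}}{\Gamma(m_X)}\left(\frac{m_Y\Omega_X}{m_Y\Omega_X+m_X\Omega_Y}\right)^{m_Y}\left(\frac{m_X}{\Omega_X}\right)^{m_X}{}_1F_1\!\left(m_Y;m_X;\frac{m_X^2\Omega_Y r^2}{\Omega_X(m_Y\Omega_X+m_X\Omega_Y)}\right)e^{-\frac{m_X}{\Omega_X}r^2},\quad r>0.$$ Set $\bar\beta=\frac{m_X\Omega_Y}{m_Y\Omega_X+m_X\Omega_Y}$. For $\alpha>0$ put $$\mathrm{C}_\alpha=\left[\frac{\Gamma(m_X)}{\Gamma(m_X+\frac{2}{\alpha})\,{}_2F_1\!\left(m_Y,-\frac{2}{\alpha};m_X;-\frac{m_X\Omega_Y}{m_Y\Omega_X}\right)}\right]^{\alpha/2}.$$ For $\bar\gamma>0$, the instantaneous SNR of the $\alpha$-Beaulieu–Xie shadowed channel with average SNR $\bar\gamma$ is the random variable $\gamma=\bar\gamma\,\big(\mathrm{C}_\alpha m_X\bar R^2/\Omega_X\big)^{2/\alpha}$. Here ${}_1F_1(a;b;z)=\sum_{n\ge0}\frac{(a)_n}{(b)_n}\frac{z^n}{n!}$, ${}_2F_1$ is the Gauss hypergeometric function. *)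

theory Defs
  imports "HOL-Analysis.Analysis"
begin

definition hyp1F1 :: "real \<Rightarrow> real \<Rightarrow> real \<Rightarrow> real" where
  "hyp1F1 a b z = (\<Sum>n. pochhammer a n / pochhammer b n * z ^ n / fact n)"

text \<open>Gauss hypergeometric function 2F1(a,b;c;z): the power series for z \<ge> 0 (|z|<1),
  and for z < 0 its analytic continuation given by the Pfaff transformation
  2F1(a,b;c;z) = (1-z)^(-a) 2F1(a,c-b;c;z/(z-1)), where z/(z-1) lies in (0,1).
  For -1 < z < 0 both expressions coincide.\<close>
definition hyp2F1_series :: "real \<Rightarrow> real \<Rightarrow> real \<Rightarrow> real \<Rightarrow> real" where
  "hyp2F1_series a b c z = (\<Sum>n. pochhammer a n * pochhammer b n / pochhammer c n * z ^ n / fact n)"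

definition hyp2F1 :: "real \<Rightarrow> real \<Rightarrow> real \<Rightarrow> real \<Rightarrow> real" where
  "hyp2F1 a b c z =
     (if z < 0 then (1 - z) powr (-a) * hyp2F1_series a (c - b) c (z / (z - 1))
      else hyp2F1_series a b c z)"

definition bx_pdf :: "real \<Rightarrow> real \<Rightarrow> real \<Rightarrow> real \<Rightarrow> real \<Rightarrow> real" where
  "bx_pdf mX mY OX OY r =
     (if r > 0 then
        2 * r powr (2 * mX - 1) / Gamma mX
        * (mY * OX / (mY * OX + mX * OY)) powr mY
        * (mX / OX) powr mX
        * hyp1F1 mY mX (mX\<^sup>2 * OY * r\<^sup>2 / (OX * (mY * OX + mX * OY)))
        * exp (- (mX / OX) * r\<^sup>2)
      else 0)"

definition bx_beta :: "real \<Rightarrow> real \<Rightarrow> real \<Rightarrow> real \<Rightarrow> real" where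
  "bx_beta mX mY OX OY = mX * OY / (mY * OX + mX * OY)"

definition bx_C :: "real \<Rightarrow> real \<Rightarrow> real \<Rightarrow> real \<Rightarrow> real \<Rightarrow> real" where
  "bx_C mX mY OX OY \<alpha> =
     (Gamma mX / (Gamma (mX + 2 / \<alpha>) * hyp2F1 mY (- 2 / \<alpha>) mX (- mX * OY / (mY * OX))))
       powr (\<alpha> / 2)"

definition abx_snr :: "real \<Rightarrow> real \<Rightarrow> real \<Rightarrow> real \<Rightarrow> real \<Rightarrow> real \<Rightarrow> real \<Rightarrow> real" where
  "abx_snr mX mY OX OY \<alpha> gbar r =
     gbar * (bx_C mX mY OX OY \<alpha> * mX * r\<^sup>2 / OX) powr (2 / \<alpha>)"

definition abx_cdf :: "real \<Rightarrow> real \<Rightarrow> real \<Rightarrow> real \<Rightarrow> real \<Rightarrow> real \<Rightarrow> real \<Rightarrow> real" where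
  "abx_cdf mX mY OX OY \<alpha> gbar g =
     (LINT r : {r. 0 < r \<and> abx_snr mX mY OX OY \<alpha> gbar r \<le> g} | lborel. bx_pdf mX mY OX OY r)"

definition abx_pdf :: "real \<Rightarrow> real \<Rightarrow> real \<Rightarrow> real \<Rightarrow> real \<Rightarrow> real \<Rightarrow> real \<Rightarrow> real" where
  "abx_pdf mX mY OX OY \<alpha> gbar g = deriv (abx_cdf mX mY OX OY \<alpha> gbar) g"

end

theory Submission
  imports Defs "HOL-Real_Asymp.Real_Asymp"
begin


lemma ratio_summable:
  fixes f :: "nat \<Rightarrow> real"
  assumes nz: "\<And>n. f n \<noteq> 0" and lim: "(\<lambda>n. norm (f (Suc n)) / norm (f n)) \<longlonglongrightarrow> L" and L: "L < 1"
  shows "summable f"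
proof -
  have "(1+L)/2 > L" using L by simp
  from order_tendstoD(2)[OF lim this]
  have "eventually (\<lambda>n. norm (f (Suc n)) / norm (f n) < (1+L)/2) sequentially" .
  then obtain N where N: "\<And>n. n \<ge> N \<Longrightarrow> norm (f (Suc n)) / norm (f n) < (1+L)/2"
    by (auto simp: eventually_sequentially)
  show ?thesis
  proof (rule summable_ratio_test[of "(1+L)/2" N])
    show "(1+L)/2 < 1" using L by simp
    fix n assume "n \<ge> N"
    from N[OF this] nz[of n] show "norm (f (Suc n)) \<le> (1+L)/2 * norm (f n)"
      by (simp add: divide_less_eq)
  qed
qed

lemma norm_ratio: "t \<noteq> 0 \<Longrightarrow> q \<ge> 0 \<Longrightarrow> norm (t * q) / norm t = (q::real)"
  by (simp add: abs_mult)

lemma summable_1F1_pos: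
  fixes a b y :: real
  assumes a: "a > 0" and b: "b > 0" and y: "y > 0"
  shows "summable (\<lambda>n. pochhammer a n / pochhammer b n / fact n * y ^ n)"
proof (rule ratio_summable)
  fix n show "pochhammer a n / pochhammer b n / fact n * y ^ n \<noteq> 0"
    using pochhammer_pos[OF a, of n] pochhammer_pos[OF b, of n] y by simp
next
  have eq: "norm (pochhammer a (Suc n) / pochhammer b (Suc n) / fact (Suc n) * y ^ Suc n) /
        norm (pochhammer a n / pochhammer b n / fact n * y ^ n)
      = (a + real n) / ((b + real n) * (real n + 1)) * y" for n
  proof -
    have pa: "pochhammer a n > 0" and pb: "pochhammer b n > 0" using pochhammer_pos a b by auto
    have e: "pochhammer a (Suc n) / pochhammer b (Suc n) / fact (Suc n) * y ^ Suc n
      = (pochhammer a n / pochhammer b n / fact n * y ^ n) * ((a + real n) / ((b + real n) * (real n + 1)) * y)"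
      using pa pb a b y by (simp add: pochhammer_Suc field_simps)
    have nz: "pochhammer a n / pochhammer b n / fact n * y ^ n \<noteq> 0" using pa pb y by simp
    have q: "(a + real n) / ((b + real n) * (real n + 1)) * y \<ge> 0" using a b y by simp
    show ?thesis unfolding e by (rule norm_ratio[OF nz q])
  qed
  have "(\<lambda>n::nat. (a + real n) / ((b + real n) * (real n + 1)) * y) \<longlonglongrightarrow> 0"
    by real_asymp
  then show "(\<lambda>n. norm (pochhammer a (Suc n) / pochhammer b (Suc n) / fact (Suc n) * y ^ Suc n) /
        norm (pochhammer a n / pochhammer b n / fact n * y ^ n)) \<longlonglongrightarrow> 0"
    by (simp only: eq)
qed simp

lemma summable_1F1:
  fixes a b y :: real
  assumes a: "a > 0" and b: "b > 0"
  shows "summable (\<lambda>n. pochhammer a n / pochhammer b n / fact n * y ^ n)"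
proof (rule summable_comparison_test)
  show "summable (\<lambda>n. pochhammer a n / pochhammer b n / fact n * (\<bar>y\<bar>+1) ^ n)"
    by (rule summable_1F1_pos[OF a b]) simp
  show "\<exists>N. \<forall>n\<ge>N. norm (pochhammer a n / pochhammer b n / fact n * y ^ n)
        \<le> pochhammer a n / pochhammer b n / fact n * (\<bar>y\<bar>+1) ^ n"
  proof (intro exI allI impI)
    fix n :: nat
    have le: "\<bar>y\<bar> ^ n \<le> (\<bar>y\<bar>+1) ^ n" by (rule power_mono) auto
    have c: "pochhammer a n / pochhammer b n / fact n \<ge> 0"
      using pochhammer_pos[OF a, of n] pochhammer_pos[OF b, of n] by simp
    have "norm (pochhammer a n / pochhammer b n / fact n * y ^ n)
        = pochhammer a n / pochhammer b n / fact n * \<bar>y\<bar> ^ n"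
      using pochhammer_pos[OF a, of n] pochhammer_pos[OF b, of n] by (simp add: abs_mult power_abs)
    also have "\<dots> \<le> pochhammer a n / pochhammer b n / fact n * (\<bar>y\<bar>+1) ^ n"
      by (rule mult_left_mono[OF le c])
    finally show "norm (pochhammer a n / pochhammer b n / fact n * y ^ n)
        \<le> pochhammer a n / pochhammer b n / fact n * (\<bar>y\<bar>+1) ^ n" .
  qed
qed

lemma hyp1F1_eq: "hyp1F1 a b = (\<lambda>z. \<Sum>n. pochhammer a n / pochhammer b n / fact n * z ^ n)"
  unfolding hyp1F1_def by (intro ext arg_cong[where f=suminf]) (auto simp: field_simps)

lemma hyp1F1_isCont:
  fixes a b z :: real
  assumes a: "a > 0" and b: "b > 0"
  shows "isCont (hyp1F1 a b) z"
  unfolding hyp1F1_eq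
  by (rule isCont_powser_converges_everywhere) (rule summable_1F1[OF a b])

lemma hyp1F1_0: "hyp1F1 a b 0 = 1"
  unfolding hyp1F1_eq by (simp only: powser_zero) simp

lemma hyp2F1_series_pos:
  fixes a b c w :: real
  assumes a: "a > 0" and b: "b > 0" and c: "c > 0" and w: "0 < w" "w < 1"
  shows "hyp2F1_series a b c w > 0"
proof -
  let ?t = "\<lambda>n. pochhammer a n * pochhammer b n / pochhammer c n * w ^ n / fact n"
  have pos: "?t n > 0" for n
    using pochhammer_pos[OF a, of n] pochhammer_pos[OF b, of n] pochhammer_pos[OF c, of n] w by simp
  have "summable ?t"
  proof (rule ratio_summable)
    show "?t n \<noteq> 0" for n using pos[of n] by (metis less_irrefl)
    have eq: "norm (?t (Suc n)) / norm (?t n)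
      = (a + real n) * (b + real n) / ((c + real n) * (real n + 1)) * w" for n
    proof -
      have pa: "pochhammer a n > 0" and pb: "pochhammer b n > 0" and pc: "pochhammer c n > 0"
        using pochhammer_pos a b c by auto
      have e: "?t (Suc n) = ?t n * ((a + real n) * (b + real n) / ((c + real n) * (real n + 1)) * w)"
        using pa pb pc a b c w by (simp add: pochhammer_Suc field_simps)
      have q: "(a + real n) * (b + real n) / ((c + real n) * (real n + 1)) * w \<ge> 0" using a b c w by simp
      have nz: "?t n \<noteq> 0" using pos[of n] by (metis less_irrefl)
      show ?thesis unfolding e by (rule norm_ratio[OF nz q])
    qed
    have "(\<lambda>n::nat. (a + real n) * (b + real n) / ((c + real n) * (real n + 1)) * w) \<longlonglongrightarrow> w"
      by real_asymp
    then show "(\<lambda>n. norm (?t (Suc n)) / norm (?t n)) \<longlonglongrightarrow> w" by (simp only: eq)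
  qed (use w in auto)
  then show ?thesis unfolding hyp2F1_series_def
    using pos by (intro suminf_pos) auto
qed



locale bx =
  fixes mX mY OX OY \<alpha> :: real
  assumes mX: "mX > 0" and mY: "mY > 0" and OX: "OX > 0" and OY: "OY > 0" and al: "\<alpha> > 0"
begin

definition "aa = mX\<^sup>2 * OY / (OX * (mY * OX + mX * OY))"
definition "phi r = hyp1F1 mY mX (aa * r\<^sup>2) * exp (- (mX / OX) * r\<^sup>2)"
definition "Q = mY * OX / (mY * OX + mX * OY)"
definition "K = 2 / Gamma mX * Q powr mY * (mX / OX) powr mX"
definition "G r = K * phi r * r powr (2*mX - 1)"
definition "F x = (LINT r : {0<..x} | lborel. bx_pdf mX mY OX OY r)"

lemma Q_pos: "Q > 0" unfolding Q_def using mX mY OX OY by (intro divide_pos_pos mult_pos_pos add_pos_pos) auto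

lemma K_pos: "K > 0" using mX mY OX OY Q_pos by (simp add: K_def)

lemma pdf_eq: "r > 0 \<Longrightarrow> bx_pdf mX mY OX OY r = G r"
proof -
  assume r: "r > 0"
  have "mX\<^sup>2 * OY * r\<^sup>2 / (OX * (mY * OX + mX * OY)) = aa * r\<^sup>2" by (simp add: aa_def)
  then show ?thesis using r by (simp add: bx_pdf_def G_def phi_def K_def Q_def mult_ac)
qed

lemma phi_cont: "isCont phi r"
proof -
  have "isCont (\<lambda>r. hyp1F1 mY mX (aa * r\<^sup>2)) r"
    by (rule isCont_o2[where f="\<lambda>r. aa * r\<^sup>2"]) (auto intro: continuous_intros hyp1F1_isCont mY mX)
  then show ?thesis unfolding phi_def by (intro continuous_intros)
qed

lemma phi_cont_on: "continuous_on S phi"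
  by (simp add: continuous_at_imp_continuous_on phi_cont)

lemma phi0: "phi 0 = 1" by (simp add: phi_def hyp1F1_0)

lemma G_cont: "S \<subseteq> {0<..} \<Longrightarrow> continuous_on S G"
  unfolding G_def by (auto intro!: continuous_intros phi_cont_on)

lemma G_absint: assumes x: "x \<ge> 0" shows "G absolutely_integrable_on {0..x}"
proof -
  have m: "(\<lambda>r. K * phi r) \<in> borel_measurable (lebesgue_on {0..x})"
    by (rule continuous_imp_measurable_on_sets_lebesgue) (auto intro!: continuous_intros phi_cont_on)
  have bd: "bounded ((\<lambda>r. K * phi r) ` {0..x})"
    by (intro compact_imp_bounded compact_continuous_image) (auto intro!: continuous_intros phi_cont_on)
  have pw: "(\<lambda>r. r powr (2*mX-1)) absolutely_integrable_on {0..x}"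
    by (intro nonnegative_absolutely_integrable_1 integrable_on_powr_from_0) (use mX x in auto)
  have "G = (\<lambda>r. K * phi r * r powr (2*mX-1))" by (rule ext) (simp add: G_def)
  then show ?thesis
    using absolutely_integrable_bounded_measurable_product_real[OF m _ bd pw] by simp
qed

lemma G_integrable: "x \<ge> 0 \<Longrightarrow> G integrable_on {0..x}"
  using G_absint absolutely_integrable_on_def by blast

lemma G0: "G 0 = 0" by (simp add: G_def)

lemma F_eq: assumes x: "x \<ge> 0" shows "F x = integral {0..x} G"
proof -
  have Gs: "set_integrable lebesgue {0<..x} G"
    by (rule set_integrable_subset[OF G_absint[OF x]]) auto
  have "(\<lambda>r. indicator {0<..x} r *\<^sub>R G r) \<in> borel_measurable borel"
    by (rule borel_measurable_continuous_on_indicator) (auto intro: G_cont)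
  then have meas: "(\<lambda>r. indicator {0<..x} r *\<^sub>R G r) \<in> borel_measurable lborel"
    unfolding measurable_lborel2 .
  have Gl: "set_integrable lborel {0<..x} G"
    using Gs integrable_completion[OF meas] unfolding set_integrable_def by simp
  have "F x = (LINT r:{0<..x}|lborel. G r)"
    unfolding F_def by (rule set_lebesgue_integral_cong) (auto simp: pdf_eq)
  also have "\<dots> = integral {0<..x} G" by (rule set_borel_integral_eq_integral(2)[OF Gl])
  also have "\<dots> = integral {0..x} G"
  proof (rule integral_spike_set)
    show "negligible {r \<in> {0<..x} - {0..x}. G r \<noteq> 0}"
      by (rule negligible_subset[OF negligible_empty]) auto
    show "negligible {r \<in> {0..x} - {0<..x}. G r \<noteq> 0}"
      by (rule negligible_subset[OF negligible_empty]) (use G0 in \<open>fastforce simp: le_less\<close>)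
  qed
  finally show ?thesis .
qed

lemma F_deriv: assumes x: "x > 0" shows "(F has_real_derivative G x) (at x)"
proof -
  define c where "c = x / 2"
  define d where "d = 2 * x"
  have c: "0 < c" "c < x" "x < d" using x by (auto simp: c_def d_def)
  have Gc: "continuous_on {c..d} G" by (rule G_cont) (use c in auto)
  have "((\<lambda>u. integral {c..u} G) has_vector_derivative G x) (at x within {c..d})"
    by (rule integral_has_vector_derivative[OF Gc]) (use c in auto)
  moreover have "at x within {c..d} = at x"
    by (rule at_within_interior) (use c in auto)
  ultimately have d1: "((\<lambda>u. integral {c..u} G) has_real_derivative G x) (at x)"
    by (simp add: has_real_derivative_iff_has_vector_derivative)
  have d2: "((\<lambda>u. integral {0..c} G + integral {c..u} G) has_real_derivative 0 + G x) (at x)"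
    by (intro DERIV_add DERIV_const d1)
  show ?thesis
  proof (rule has_field_derivative_transform_within_open[OF d2[simplified], of "{c<..}"])
    fix u assume "u \<in> {c<..}"
    then have u: "c < u" by simp
    show "integral {0..c} G + integral {c..u} G = F u"
      using Henstock_Kurzweil_Integration.integral_combine[where a=0 and c=c and b=u and f=G] G_integrable[of u] u c F_eq[of u] by simp
  qed (use c in auto)
qed

lemma F_asym: "((\<lambda>x. F x / (K * x powr (2*mX) / (2*mX))) \<longlongrightarrow> 1) (at_right 0)"
proof (rule tendstoI)
  fix e :: real assume e: "e > 0"
  have "phi \<midarrow>0\<rightarrow> 1" using phi_cont[of 0] by (simp add: isCont_def phi0)
  from LIM_D[OF this, of "e/2"] e obtain s where s: "s > 0"
    and hs: "\<And>r. r \<noteq> 0 \<and> norm (r - 0) < s \<longrightarrow> norm (phi r - 1) < e/2" by auto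
  have hs': "\<bar>phi r - 1\<bar> \<le> e/2" if "\<bar>r\<bar> < s" for r
  proof (cases "r = 0")
    case True then show ?thesis using e by (simp add: phi0)
  next
    case False then show ?thesis using hs[of r] that by simp
  qed
  show "eventually (\<lambda>x. dist (F x / (K * x powr (2*mX) / (2*mX))) 1 < e) (at_right 0)"
    unfolding eventually_at_right_field
  proof (intro exI[of _ s] conjI allI impI)
    show "s > 0" by fact
    fix x :: real assume x: "x > 0" "x < s"
    define P where "P = K * x powr (2*mX) / (2*mX)"
    have Ppos: "P > 0" using K_pos x mX by (simp add: P_def)
    have hP: "((\<lambda>r. K * r powr (2*mX-1)) has_integral P) {0..x}"
      using has_integral_mult_right[OF has_integral_powr_from_0[of "2*mX-1" x], of K] mX x
      by (simp add: P_def)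
    have int1: "(\<lambda>r. K * r powr (2*mX-1)) integrable_on {0..x}" using hP by blast
    have int2: "(\<lambda>r. K * (e/2) * r powr (2*mX-1)) integrable_on {0..x}"
      using integrable_on_cmult_left[OF int1, of "e/2"] by (simp add: mult_ac)
    have "F x - P = integral {0..x} G - integral {0..x} (\<lambda>r. K * r powr (2*mX-1))"
      using F_eq[OF less_imp_le[OF x(1)]] integral_unique[OF hP] by (simp only:)
    also have "\<dots> = integral {0..x} (\<lambda>r. G r - K * r powr (2*mX-1))"
      by (rule integral_diff[symmetric]) (use G_integrable[of x] x int1 in auto)
    finally have eq: "F x - P = integral {0..x} (\<lambda>r. G r - K * r powr (2*mX-1))" .
    have "norm (integral {0..x} (\<lambda>r. G r - K * r powr (2*mX-1)))
        \<le> integral {0..x} (\<lambda>r. K * (e/2) * r powr (2*mX-1))"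
    proof (rule integral_norm_bound_integral)
      show "(\<lambda>r. G r - K * r powr (2*mX-1)) integrable_on {0..x}"
        using G_integrable[of x] x int1 by (intro integrable_diff) auto
      show "(\<lambda>r. K * (e/2) * r powr (2*mX-1)) integrable_on {0..x}" by (rule int2)
      fix r assume r: "r \<in> {0..x}"
      have "\<bar>phi r - 1\<bar> \<le> e/2" using r x by (intro hs') auto
      then have "K * \<bar>phi r - 1\<bar> * r powr (2*mX-1) \<le> K * (e/2) * r powr (2*mX-1)"
        using K_pos by (intro mult_right_mono mult_left_mono) auto
      moreover have "norm (G r - K * r powr (2*mX-1)) = K * \<bar>phi r - 1\<bar> * r powr (2*mX-1)"
      proof -
        have "G r - K * r powr (2*mX-1) = K * (phi r - 1) * r powr (2*mX-1)"
          by (simp add: G_def algebra_simps)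
        then show ?thesis using K_pos by (simp add: abs_mult)
      qed
      ultimately show "norm (G r - K * r powr (2*mX-1)) \<le> K * (e/2) * r powr (2*mX-1)" by simp
    qed
    also have "integral {0..x} (\<lambda>r. K * (e/2) * r powr (2*mX-1)) = e/2 * P"
      using integral_unique[OF has_integral_mult_right[OF hP, of "e/2"]] by (simp add: mult_ac)
    finally have "\<bar>F x - P\<bar> \<le> e/2 * P" using eq by simp
    then have "\<bar>F x / P - 1\<bar> \<le> e/2" using Ppos
      by (simp add: abs_le_iff field_simps)
    then show "dist (F x / (K * x powr (2*mX) / (2*mX))) 1 < e"
      using e unfolding P_def[symmetric] dist_real_def by simp
  qed
qed

end


context bx
begin

definition "C = bx_C mX mY OX OY \<alpha>"

lemma C_pos: "C > 0"
proof -
  define z where "z = - mX * OY / (mY * OX)"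
  have "mX * OY > 0" "mY * OX > 0" using mX mY OX OY by auto
  then have z: "z < 0" unfolding z_def by (simp add: divide_neg_pos)
  have w: "0 < z / (z - 1)" "z / (z - 1) < 1" using z by (auto simp: zero_less_divide_iff divide_less_eq)
  have m2: "mX + 2 / \<alpha> > 0" using mX al by (intro add_pos_pos divide_pos_pos) auto
  then have b: "mX - - 2 / \<alpha> > 0" by simp
  have "hyp2F1 mY (- 2 / \<alpha>) mX z > 0"
    unfolding hyp2F1_def using z hyp2F1_series_pos[OF mY b mX w] by simp
  moreover have "Gamma mX \<noteq> 0" "Gamma (mX + 2 / \<alpha>) \<noteq> 0"
    using Gamma_real_pos[OF mX] Gamma_real_pos[OF m2] by linarith+
  ultimately show ?thesis unfolding C_def bx_C_def z_def[symmetric]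
    using mX al by simp
qed

definition "Rf gb y = sqrt (OX / (C * mX) * (y / gb) powr (\<alpha> / 2))"

lemma Rf_pos: "gb > 0 \<Longrightarrow> y > 0 \<Longrightarrow> Rf gb y > 0"
  unfolding Rf_def using C_pos mX OX by simp

lemma Rf_sq: "gb > 0 \<Longrightarrow> y > 0 \<Longrightarrow> (Rf gb y)\<^sup>2 = OX / (C * mX) * (y / gb) powr (\<alpha> / 2)"
  unfolding Rf_def using C_pos mX OX by simp

lemma snr_le:
  assumes gb: "gb > 0" and y: "y > 0" and r: "r > 0"
  shows "abx_snr mX mY OX OY \<alpha> gb r \<le> y \<longleftrightarrow> r \<le> Rf gb y"
proof -
  define u where "u = C * mX * r\<^sup>2 / OX"
  have u: "u > 0" using C_pos mX OX r by (simp add: u_def)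
  have "abx_snr mX mY OX OY \<alpha> gb r = gb * u powr (2 / \<alpha>)"
    by (simp add: abx_snr_def u_def C_def)
  then have "(abx_snr mX mY OX OY \<alpha> gb r \<le> y) \<longleftrightarrow> u powr (2 / \<alpha>) \<le> y / gb"
    using gb by (simp add: le_divide_eq mult.commute)
  also have "\<dots> \<longleftrightarrow> ln (u powr (2 / \<alpha>)) \<le> ln (y / gb)"
    by (rule ln_le_cancel_iff[symmetric]) (use u gb y in auto)
  also have "\<dots> \<longleftrightarrow> (2 / \<alpha>) * ln u \<le> ln (y / gb)" by simp
  also have "\<dots> \<longleftrightarrow> ln u \<le> (\<alpha> / 2) * ln (y / gb)"
    using al by (simp add: field_simps)
  also have "\<dots> \<longleftrightarrow> ln u \<le> ln ((y / gb) powr (\<alpha> / 2))" by simp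
  also have "\<dots> \<longleftrightarrow> u \<le> (y / gb) powr (\<alpha> / 2)"
    by (rule ln_le_cancel_iff) (use u gb y in auto)
  also have "\<dots> \<longleftrightarrow> r\<^sup>2 \<le> OX / (C * mX) * (y / gb) powr (\<alpha> / 2)"
    using C_pos mX OX by (simp add: u_def field_simps)
  also have "\<dots> \<longleftrightarrow> sqrt (r\<^sup>2) \<le> Rf gb y" unfolding Rf_def by (simp only: real_sqrt_le_iff)
  also have "sqrt (r\<^sup>2) = r" using r by simp
  finally show ?thesis .
qed

lemma cdf_eq:
  assumes gb: "gb > 0" and y: "y > 0"
  shows "abx_cdf mX mY OX OY \<alpha> gb y = F (Rf gb y)"
proof -
  have "{r. 0 < r \<and> abx_snr mX mY OX OY \<alpha> gb r \<le> y} = {0<..Rf gb y}"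
    using snr_le[OF gb y] by auto
  then show ?thesis by (simp add: abx_cdf_def F_def)
qed

lemma Rf_lim:
  assumes g: "g > 0"
  shows "filterlim (\<lambda>gb. Rf gb g) (at_right 0) at_top"
  unfolding filterlim_at
proof
  show "eventually (\<lambda>gb. Rf gb g \<in> {0<..} \<and> Rf gb g \<noteq> 0) at_top"
    by (rule eventually_mono[OF eventually_gt_at_top[of 0]])
       (metis Rf_pos g greaterThan_iff order_less_irrefl)
  have "((\<lambda>gb. g / gb) \<longlongrightarrow> 0) at_top"
    by (intro tendsto_divide_0[OF tendsto_const] filterlim_at_top_imp_at_infinity filterlim_ident)
  then have "((\<lambda>gb. (g / gb) powr (\<alpha> / 2)) \<longlongrightarrow> 0) at_top"
  proof (rule tendsto_zero_powrI[OF _ tendsto_const])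
    show "eventually (\<lambda>gb. 0 \<le> g / gb) at_top"
      by (rule eventually_mono[OF eventually_gt_at_top[of 0]]) (use g in simp)
  qed (use al in simp_all)
  then have "((\<lambda>gb. OX / (C * mX) * (g / gb) powr (\<alpha> / 2)) \<longlongrightarrow> OX / (C * mX) * 0) at_top"
    by (intro tendsto_mult tendsto_const)
  then have "((\<lambda>gb. Rf gb g) \<longlongrightarrow> sqrt (OX / (C * mX) * 0)) at_top"
    unfolding Rf_def by (rule tendsto_real_sqrt)
  then show "((\<lambda>gb. Rf gb g) \<longlongrightarrow> 0) at_top" by simp
qed

lemma one_minus_beta: "1 - bx_beta mX mY OX OY = Q"
proof -
  have "mY * OX + mX * OY > 0" using mX mY OX OY by (intro add_pos_pos mult_pos_pos) auto
  then show ?thesis unfolding bx_beta_def Q_def by (simp add: field_simps)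
qed

lemma Gamma_succ: "Gamma (mX + 1) = mX * Gamma mX"
  using mX by (intro Gamma_plus1) (auto dest: nonpos_Ints_nonpos)

lemma cdf_expected:
  assumes gb: "gb > 0" and g: "g > 0"
  shows "(1 - bx_beta mX mY OX OY) powr mY / (C powr mX * Gamma (mX + 1)) * (g / gb) powr (\<alpha> * mX / 2)
         = K * Rf gb g powr (2 * mX) / (2 * mX)"
proof -
  define R where "R = Rf gb g"
  define s where "s = g / gb"
  have R: "R > 0" using Rf_pos[OF gb g] by (simp add: R_def)
  have s: "s > 0" using gb g by (simp add: s_def)
  have lnR: "ln R = (ln OX - ln C - ln mX + (\<alpha> / 2) * ln s) / 2"
  proof -
    have "ln R = ln (R\<^sup>2) / 2" using R by (simp add: ln_realpow)
    also have "R\<^sup>2 = OX / (C * mX) * s powr (\<alpha> / 2)" using Rf_sq[OF gb g] by (simp add: R_def s_def)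
    finally show ?thesis using C_pos mX OX s by (simp add: ln_mult ln_div)
  qed
  have pos1: "(1 - bx_beta mX mY OX OY) powr mY / (C powr mX * Gamma (mX + 1)) * s powr (\<alpha> * mX / 2) > 0"
    using Q_pos C_pos mX s by (simp add: one_minus_beta)
  have pos2: "K * R powr (2 * mX) / (2 * mX) > 0" using K_pos R mX by simp
  have "ln ((1 - bx_beta mX mY OX OY) powr mY / (C powr mX * Gamma (mX + 1)) * s powr (\<alpha> * mX / 2))
      = ln (K * R powr (2 * mX) / (2 * mX))"
    unfolding Gamma_succ one_minus_beta K_def
    using Q_pos C_pos mX OX s R Gamma_real_pos[OF mX]
    by (simp add: ln_mult ln_div lnR field_simps)
  then have "(1 - bx_beta mX mY OX OY) powr mY / (C powr mX * Gamma (mX + 1)) * s powr (\<alpha> * mX / 2)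
      = K * R powr (2 * mX) / (2 * mX)" using pos1 pos2 by simp
  then show ?thesis by (simp add: R_def s_def)
qed

end


context bx
begin

definition "Dr gb y = inverse (Rf gb y) / 2 * (OX / (C * mX) * ((\<alpha>/2) * (y/gb) powr (\<alpha>/2 - 1) * (1/gb)))"

lemma Rf_deriv:
  assumes gb: "gb > 0" and y: "y > 0"
  shows "((\<lambda>y. Rf gb y) has_real_derivative Dr gb y) (at y)"
proof -
  have s: "y / gb > 0" using gb y by simp
  have h1: "((\<lambda>y. y / gb) has_real_derivative 1 / gb) (at y)"
    using gb by (auto intro!: derivative_eq_intros)
  have h2: "((\<lambda>u. u powr (\<alpha>/2)) has_real_derivative (\<alpha>/2) * (y/gb) powr (\<alpha>/2-1)) (at (y/gb))"
    by (rule has_real_derivative_powr[OF s])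
  have h12: "((\<lambda>y. (y/gb) powr (\<alpha>/2)) has_real_derivative (\<alpha>/2) * (y/gb) powr (\<alpha>/2-1) * (1/gb)) (at y)"
    by (rule DERIV_chain2[OF h2 h1])
  have h3: "((\<lambda>y. OX/(C*mX) * (y/gb) powr (\<alpha>/2)) has_real_derivative
      OX/(C*mX) * ((\<alpha>/2) * (y/gb) powr (\<alpha>/2-1) * (1/gb))) (at y)"
    by (rule DERIV_cmult[OF h12])
  have "(y/gb) powr (\<alpha>/2) > 0" using gb y by simp
  then have pos: "OX/(C*mX) * (y/gb) powr (\<alpha>/2) > 0" using C_pos mX OX
    by (intro mult_pos_pos divide_pos_pos) auto
  show ?thesis
    unfolding Rf_def Dr_def by (rule DERIV_chain2[OF DERIV_real_sqrt[OF pos] h3])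
qed

lemma cdf_deriv:
  assumes gb: "gb > 0" and g: "g > 0"
  shows "(abx_cdf mX mY OX OY \<alpha> gb has_real_derivative G (Rf gb g) * Dr gb g) (at g)"
proof -
  have "((\<lambda>y. F (Rf gb y)) has_real_derivative G (Rf gb g) * Dr gb g) (at g)"
    by (rule DERIV_chain2[OF F_deriv[OF Rf_pos[OF gb g]] Rf_deriv[OF gb g]])
  then show ?thesis
    by (rule has_field_derivative_transform_within_open[of _ _ _ "{0<..}"]) (use g cdf_eq[OF gb] in auto)
qed

lemma pdf_val:
  assumes gb: "gb > 0" and g: "g > 0"
  shows "abx_pdf mX mY OX OY \<alpha> gb g = G (Rf gb g) * Dr gb g"
  unfolding abx_pdf_def by (rule DERIV_imp_deriv[OF cdf_deriv[OF gb g]])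

lemma pdf_ratio:
  assumes gb: "gb > 0" and g: "g > 0"
  shows "abx_pdf mX mY OX OY \<alpha> gb g /
            (\<alpha> * (1 - bx_beta mX mY OX OY) powr mY
              / (2 * C powr mX * Gamma mX * gb)
              * (g / gb) powr (\<alpha> * mX / 2 - 1)
              * exp (- ((g / gb) powr (\<alpha> / 2)) / C))
       = hyp1F1 mY mX (aa * (Rf gb g)\<^sup>2)"
proof -
  define R where "R = Rf gb g"
  define s where "s = g / gb"
  have R: "R > 0" using Rf_pos[OF gb g] by (simp add: R_def)
  have s: "s > 0" using gb g by (simp add: s_def)
  have R2: "R\<^sup>2 = OX / (C * mX) * s powr (\<alpha> / 2)" using Rf_sq[OF gb g] by (simp add: R_def s_def)
  have lnR: "ln R = (ln OX - ln C - ln mX + (\<alpha> / 2) * ln s) / 2"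
  proof -
    have "ln R = ln (R\<^sup>2) / 2" using R by (simp add: ln_realpow)
    also note R2
    finally show ?thesis using C_pos mX OX s by (simp add: ln_mult ln_div)
  qed
  have E: "- (mX / OX) * R\<^sup>2 = - (s powr (\<alpha> / 2)) / C"
    using R2 C_pos mX OX by (simp add: field_simps)
  define M where "M = \<alpha> * Q powr mY / (2 * C powr mX * Gamma mX * gb) * s powr (\<alpha> * mX / 2 - 1)"
  have Mpos: "M > 0" using Q_pos C_pos mX s al gb by (simp add: M_def)
  have Dr: "Dr gb g = inverse R / 2 * (OX / (C * mX) * ((\<alpha>/2) * s powr (\<alpha>/2 - 1) * (1/gb)))"
    by (simp add: Dr_def R_def s_def)
  have pos3: "K * R powr (2*mX - 1) * Dr gb g > 0"
    using K_pos R C_pos mX OX al s gb unfolding Dr by simp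
  have "ln (K * R powr (2*mX - 1) * Dr gb g) = ln M"
    using Q_pos C_pos mX OX s R al gb Gamma_real_pos[OF mX] unfolding Dr K_def M_def
    by (simp add: ln_mult ln_div ln_inverse lnR field_simps)
  then have KM: "K * R powr (2*mX - 1) * Dr gb g = M" using pos3 Mpos by simp
  have "abx_pdf mX mY OX OY \<alpha> gb g = hyp1F1 mY mX (aa * R\<^sup>2) * exp (- (s powr (\<alpha> / 2)) / C) * M"
    unfolding pdf_val[OF gb g] R_def[symmetric] KM[symmetric] G_def phi_def E by (simp add: mult_ac)
  moreover have "\<alpha> * (1 - bx_beta mX mY OX OY) powr mY / (2 * C powr mX * Gamma mX * gb)
              * (g / gb) powr (\<alpha> * mX / 2 - 1) * exp (- ((g / gb) powr (\<alpha> / 2)) / C)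
      = M * exp (- (s powr (\<alpha> / 2)) / C)"
    by (simp add: M_def s_def one_minus_beta)
  ultimately show ?thesis using Mpos by (simp add: R_def)
qed

end

theorem corollary1:
  fixes mX mY OX OY \<alpha> g :: real
  assumes "mX > 0" and "mY > 0" and "OX > 0" and "OY > 0" and "\<alpha> > 0" and "g > 0"
  shows "((\<lambda>gbar. abx_pdf mX mY OX OY \<alpha> gbar g /
            (\<alpha> * (1 - bx_beta mX mY OX OY) powr mY
              / (2 * bx_C mX mY OX OY \<alpha> powr mX * Gamma mX * gbar)
              * (g / gbar) powr (\<alpha> * mX / 2 - 1)
              * exp (- ((g / gbar) powr (\<alpha> / 2)) / bx_C mX mY OX OY \<alpha>)))
          \<longlongrightarrow> 1) at_top
       \<and> ((\<lambda>gbar. abx_cdf mX mY OX OY \<alpha> gbar g /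
            ((1 - bx_beta mX mY OX OY) powr mY
              / (bx_C mX mY OX OY \<alpha> powr mX * Gamma (mX + 1))
              * (g / gbar) powr (\<alpha> * mX / 2)))
          \<longlongrightarrow> 1) at_top"
proof -
  interpret bx mX mY OX OY \<alpha> using assms by unfold_locales auto
  have g: "g > 0" by fact
  have Ceq: "bx_C mX mY OX OY \<alpha> = C" by (simp add: C_def)
  have Rlim: "((\<lambda>gb. Rf gb g) \<longlongrightarrow> 0) at_top"
    using Rf_lim[OF g] unfolding filterlim_at by blast
  show ?thesis unfolding Ceq
  proof
    have "((\<lambda>gb. aa * (Rf gb g)\<^sup>2) \<longlongrightarrow> aa * 0\<^sup>2) at_top"
      by (intro tendsto_intros Rlim)
    then have "((\<lambda>gb. hyp1F1 mY mX (aa * (Rf gb g)\<^sup>2)) \<longlongrightarrow> hyp1F1 mY mX 0) at_top"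
      using isCont_tendsto_compose[OF hyp1F1_isCont[OF mY mX]] by simp
    then have lim: "((\<lambda>gb. hyp1F1 mY mX (aa * (Rf gb g)\<^sup>2)) \<longlongrightarrow> 1) at_top"
      by (simp add: hyp1F1_0)
    show "((\<lambda>gbar. abx_pdf mX mY OX OY \<alpha> gbar g /
            (\<alpha> * (1 - bx_beta mX mY OX OY) powr mY
              / (2 * C powr mX * Gamma mX * gbar)
              * (g / gbar) powr (\<alpha> * mX / 2 - 1)
              * exp (- ((g / gbar) powr (\<alpha> / 2)) / C)))
          \<longlongrightarrow> 1) at_top"
      apply (rule Lim_transform_eventually[OF lim])
      using eventually_gt_at_top[of 0] apply eventually_elim
      apply (rule pdf_ratio[OF _ g, symmetric], assumption)
      done
  next
    have lim: "((\<lambda>gb. F (Rf gb g) / (K * Rf gb g powr (2*mX) / (2*mX))) \<longlongrightarrow> 1) at_top"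
      by (rule filterlim_compose[OF F_asym Rf_lim[OF g]])
    show "((\<lambda>gbar. abx_cdf mX mY OX OY \<alpha> gbar g /
            ((1 - bx_beta mX mY OX OY) powr mY
              / (C powr mX * Gamma (mX + 1))
              * (g / gbar) powr (\<alpha> * mX / 2)))
          \<longlongrightarrow> 1) at_top"
      apply (rule Lim_transform_eventually[OF lim])
      using eventually_gt_at_top[of 0] apply eventually_elim
      apply (simp only: cdf_eq[OF _ g] cdf_expected[OF _ g])
      done
  qed
qed


end
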